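(* Let $X, Y \subseteq \omega$. If there exists an embedding $f : \mathcal{B}^X \hookrightarrow \mathcal{K}_2^Y$ then $X' \le_T Y$.
   Context: A partial combinatory algebra (pca) is a set $A$ with a partial binary application $\cdot$ containing distinct elements $\mathrm{s},\mathrm{k}$ with $\mathrm{k}ab\downarrow = a$, $\mathrm{s}ab\downarrow$, and $\mathrm{s}abc \simeq (ac)(bc)$. Given pcas $\mathcal{A},\mathcal{B}$, an embedding $\mathcal{A}\hookrightarrow\mathcal{B}$ is an injection $f$ such that whenever $aa'\downarrow$ in $\mathcal{A}$, $f(a)f(a')\downarrow = f(aa')$. Kleene's second model $\mathcal{K}_2$ is taken with carrier $\omega^\omega$ and application $g\cdot h = \Phi^{g\oplus h}_{g(0)}$, where $\Phi_e$ is the $e$-th Turing functional and $g\cdot h$ is defined iff the function on the right is total. Van Oosten's sequential computation model $\mathcal{B}$ is the same definition but with carrier the set of partial functions $\omega\rightharpoonup\omega$ (application always defined). For $X\subseteq\omega$, $\mathcal{K}_2^X$ is the sub-pca of $X$-computable total functions and $\mathcal{B}^X$ the sub-pca of partial $X$-computable functions. $X'$ denotes the halting set relativized to $X$. *)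

theory Defs
  imports Main "HOL-Library.Nat_Bijection"
begin

datatype recf =
    RZero | RSuc | RId | RFst | RSnd | ROrc
  | RComp recf recf
  | RPair recf recf
  | RPrec recf recf
  | RMn recf

text \<open>Big-step semantics: eval O p x y means program p on input x with oracle O halts
  with output y. A query to a point where the oracle is undefined diverges.\<close>

inductive eval :: "(nat \<Rightarrow> nat option) \<Rightarrow> recf \<Rightarrow> nat \<Rightarrow> nat \<Rightarrow> bool"
  for Or :: "nat \<Rightarrow> nat option" where
  ev_zero: "eval Or RZero x 0"
| ev_suc: "eval Or RSuc x (Suc x)"
| ev_id: "eval Or RId x x"
| ev_fst: "eval Or RFst x (fst (prod_decode x))"
| ev_snd: "eval Or RSnd x (snd (prod_decode x))"
| ev_orc: "Or x = Some y \<Longrightarrow> eval Or ROrc x y"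
| ev_comp: "eval Or g x y \<Longrightarrow> eval Or f y z \<Longrightarrow> eval Or (RComp f g) x z"
| ev_pair: "eval Or f x a \<Longrightarrow> eval Or g x b \<Longrightarrow> eval Or (RPair f g) x (prod_encode (a, b))"
| ev_prec0: "eval Or f x y \<Longrightarrow> eval Or (RPrec f g) (prod_encode (x, 0)) y"
| ev_precS: "eval Or (RPrec f g) (prod_encode (x, n)) y \<Longrightarrow>
             eval Or g (prod_encode (x, prod_encode (n, y))) z \<Longrightarrow>
             eval Or (RPrec f g) (prod_encode (x, Suc n)) z"
| ev_mn: "eval Or f (prod_encode (x, n)) 0 \<Longrightarrow>
          (\<forall>m<n. \<exists>k. k \<noteq> 0 \<and> eval Or f (prod_encode (x, m)) k) \<Longrightarrow>
          eval Or (RMn f) x n"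

lemma decode_aux1: "fst (prod_decode m) \<le> m"
  by (metis le_prod_encode_1 prod.collapse prod_decode_inverse)

lemma decode_aux2: "snd (prod_decode m) \<le> m"
  by (metis le_prod_encode_2 prod.collapse prod_decode_inverse)

lemma decode_aux3: "n mod 10 \<noteq> (0::nat) \<Longrightarrow> n div 10 < n"
  by (cases "n = 0") auto

lemma decode_aux4: "n mod 10 \<noteq> (0::nat) \<Longrightarrow> fst (prod_decode (n div 10)) < n"
  using decode_aux1[of "n div 10"] decode_aux3[of n] by linarith

lemma decode_aux5: "n mod 10 \<noteq> (0::nat) \<Longrightarrow> snd (prod_decode (n div 10)) < n"
  using decode_aux2[of "n div 10"] decode_aux3[of n] by linarith

function decode :: "nat \<Rightarrow> recf" where
  "decode n =
    (let t = n mod 10; m = n div 10 in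
     if t = 0 then RZero else if t = 1 then RSuc else if t = 2 then RId
     else if t = 3 then RFst else if t = 4 then RSnd else if t = 5 then ROrc
     else if t = 6 then RComp (decode (fst (prod_decode m))) (decode (snd (prod_decode m)))
     else if t = 7 then RPair (decode (fst (prod_decode m))) (decode (snd (prod_decode m)))
     else if t = 8 then RPrec (decode (fst (prod_decode m))) (decode (snd (prod_decode m)))
     else RMn (decode m))"
  by pat_completeness auto
termination
  by (relation "measure id")
     (simp_all add: decode_aux4 decode_aux5 decode_aux3)

definition Phi :: "(nat \<Rightarrow> nat option) \<Rightarrow> nat \<Rightarrow> nat \<Rightarrow> nat option" where
  "Phi Or e x = (if \<exists>y. eval Or (decode e) x y then Some (THE y. eval Or (decode e) x y) else None)"

definition join :: "(nat \<Rightarrow> 'a) \<Rightarrow> (nat \<Rightarrow> 'a) \<Rightarrow> nat \<Rightarrow> 'a" where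
  "join g h n = (if even n then g (n div 2) else h (n div 2))"

definition chi :: "nat set \<Rightarrow> nat \<Rightarrow> nat option" where
  "chi X n = Some (if n \<in> X then 1 else 0)"

definition K2_app :: "(nat \<Rightarrow> nat) \<Rightarrow> (nat \<Rightarrow> nat) \<Rightarrow> (nat \<Rightarrow> nat) option" where
  "K2_app g h =
    (if \<forall>x. Phi (\<lambda>n. Some (join g h n)) (g 0) x \<noteq> None
     then Some (\<lambda>x. the (Phi (\<lambda>n. Some (join g h n)) (g 0) x))
     else None)"

definition B_app :: "(nat \<Rightarrow> nat option) \<Rightarrow> (nat \<Rightarrow> nat option) \<Rightarrow> (nat \<Rightarrow> nat option)" where
  "B_app g h = (case g 0 of None \<Rightarrow> (\<lambda>_. None) | Some e \<Rightarrow> Phi (join g h) e)"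

definition K2_rel :: "nat set \<Rightarrow> (nat \<Rightarrow> nat) set" where
  "K2_rel Y = {f. \<exists>e. \<forall>x. Phi (chi Y) e x = Some (f x)}"

definition B_rel :: "nat set \<Rightarrow> (nat \<Rightarrow> nat option) set" where
  "B_rel X = {f. \<exists>e. Phi (chi X) e = f}"

definition embedding_B_K2 :: "nat set \<Rightarrow> nat set \<Rightarrow> ((nat \<Rightarrow> nat option) \<Rightarrow> (nat \<Rightarrow> nat)) \<Rightarrow> bool" where
  "embedding_B_K2 X Y f \<longleftrightarrow>
     f ` B_rel X \<subseteq> K2_rel Y \<and> inj_on f (B_rel X) \<and>
     (\<forall>a\<in>B_rel X. \<forall>a'\<in>B_rel X. K2_app (f a) (f a') = Some (f (B_app a a')))"

definition jump :: "nat set \<Rightarrow> nat set" where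
  "jump X = {e. Phi (chi X) e e \<noteq> None}"

definition turing_le :: "nat set \<Rightarrow> nat set \<Rightarrow> bool" where
  "turing_le A B \<longleftrightarrow> (\<exists>e. \<forall>x. Phi (chi B) e x = chi A x)"

end

theory Submission
  imports Defs
begin

abbreviation pe :: "nat \<Rightarrow> nat \<Rightarrow> nat" where "pe a b \<equiv> prod_encode (a, b)"
abbreviation p1 :: "nat \<Rightarrow> nat" where "p1 z \<equiv> fst (prod_decode z)"
abbreviation p2 :: "nat \<Rightarrow> nat" where "p2 z \<equiv> snd (prod_decode z)"

lemma eval_det: "eval Or p x y \<Longrightarrow> eval Or p x z \<Longrightarrow> y = z"
proof (induction arbitrary: z rule: eval.induct)
  case (ev_comp g x y f z z')
  from ev_comp.prems show ?case
    by (cases rule: eval.cases) (use ev_comp.IH in blast)+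
next
  case (ev_pair f x a g b z)
  from ev_pair.prems show ?case
    by (cases rule: eval.cases) (use ev_pair.IH in auto)
next
  case (ev_prec0 f x y g z)
  from ev_prec0.prems show ?case
    by (cases rule: eval.cases) (use ev_prec0.IH in auto)
next
  case (ev_precS f g x n y z z')
  from ev_precS.prems show ?case
    by (cases rule: eval.cases) (use ev_precS.IH in auto)
next
  case (ev_mn f x n)
  have z1: "eval Or f (pe x z) 0" and z2: "\<forall>m<z. \<exists>k. k \<noteq> 0 \<and> eval Or f (pe x m) k"
    using ev_mn.prems by (cases rule: eval.cases; auto)+
  show ?case
  proof (rule ccontr)
    assume "n \<noteq> z"
    then consider "n < z" | "z < n" by linarith
    then show False
    proof cases
      case 1
      with z2 obtain k where "k \<noteq> 0" "eval Or f (pe x n) k" by auto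
      with ev_mn.IH(1) show False by auto
    next
      case 2
      with ev_mn.IH(2) obtain k where "k \<noteq> 0" "\<forall>z'. eval Or f (pe x z) z' \<longrightarrow> k = z'"
        by blast
      with z1 show False by auto
    qed
  qed
qed (erule eval.cases; auto)+

declare decode.simps[simp del]

lemma Phi_Some: "Phi Or e x = Some y \<longleftrightarrow> eval Or (decode e) x y"
proof
  assume "Phi Or e x = Some y"
  then have "\<exists>y. eval Or (decode e) x y" and y: "y = (THE y. eval Or (decode e) x y)"
    unfolding Phi_def by (auto split: if_splits)
  then show "eval Or (decode e) x y" using eval_det by (metis theI)
next
  assume "eval Or (decode e) x y"
  then show "Phi Or e x = Some y" unfolding Phi_def using eval_det by (auto intro: the_equality)
qed

lemma Phi_None: "Phi Or e x = None \<longleftrightarrow> (\<forall>y. \<not> eval Or (decode e) x y)"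
  unfolding Phi_def by auto

fun encode :: "recf \<Rightarrow> nat" where
  "encode RZero = 0" | "encode RSuc = 1" | "encode RId = 2" | "encode RFst = 3"
| "encode RSnd = 4" | "encode ROrc = 5"
| "encode (RComp f g) = 6 + 10 * pe (encode f) (encode g)"
| "encode (RPair f g) = 7 + 10 * pe (encode f) (encode g)"
| "encode (RPrec f g) = 8 + 10 * pe (encode f) (encode g)"
| "encode (RMn f) = 9 + 10 * encode f"

lemma decode_encode[simp]: "decode (encode p) = p"
  by (induction p) (subst decode.simps; simp)+

definition tc :: "((nat \<Rightarrow> nat) \<Rightarrow> nat \<Rightarrow> nat) \<Rightarrow> bool" where
  "tc h \<longleftrightarrow> (\<exists>p. \<forall>u x. eval (\<lambda>n. Some (u n)) p x (h u x))"

lemma tc_id: "tc (\<lambda>u x. x)"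
  unfolding tc_def by (rule exI[of _ RId]) (auto intro: eval.intros)

lemma tc_comp: "tc f \<Longrightarrow> tc g \<Longrightarrow> tc (\<lambda>u x. f u (g u x))"
  unfolding tc_def by (metis eval.intros(7))

lemma tc_zero: "tc (\<lambda>u x. 0)"
  unfolding tc_def by (rule exI[of _ RZero]) (auto intro: eval.intros)

lemma tc_Suc: "tc f \<Longrightarrow> tc (\<lambda>u x. Suc (f u x))"
proof -
  have "tc (\<lambda>u x. Suc x)" unfolding tc_def by (rule exI[of _ RSuc]) (auto intro: eval.intros)
  then show "tc f \<Longrightarrow> tc (\<lambda>u x. Suc (f u x))" using tc_comp[of "\<lambda>u x. Suc x" f] by simp
qed

lemma tc_p1: "tc f \<Longrightarrow> tc (\<lambda>u x. p1 (f u x))"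
proof -
  have "tc (\<lambda>u x. p1 x)" unfolding tc_def by (rule exI[of _ RFst]) (auto intro: eval.intros)
  then show "tc f \<Longrightarrow> tc (\<lambda>u x. p1 (f u x))" using tc_comp[of "\<lambda>u x. p1 x" f] by simp
qed

lemma tc_p2: "tc f \<Longrightarrow> tc (\<lambda>u x. p2 (f u x))"
proof -
  have "tc (\<lambda>u x. p2 x)" unfolding tc_def by (rule exI[of _ RSnd]) (auto intro: eval.intros)
  then show "tc f \<Longrightarrow> tc (\<lambda>u x. p2 (f u x))" using tc_comp[of "\<lambda>u x. p2 x" f] by simp
qed

lemma tc_orc: "tc f \<Longrightarrow> tc (\<lambda>u x. u (f u x))"
proof -
  have "tc (\<lambda>u x. u x)" unfolding tc_def by (rule exI[of _ ROrc]) (auto intro: eval.intros)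
  then show "tc f \<Longrightarrow> tc (\<lambda>u x. u (f u x))" using tc_comp[of "\<lambda>u x. u x" f] by simp
qed

lemma tc_pe: "tc f \<Longrightarrow> tc g \<Longrightarrow> tc (\<lambda>u x. pe (f u x) (g u x))"
  unfolding tc_def by (metis eval.intros(8))

lemma tc_const: "tc (\<lambda>u x. c)"
  by (induction c) (auto intro: tc_zero tc_Suc)

primrec precf :: "((nat\<Rightarrow>nat) \<Rightarrow> nat \<Rightarrow> nat) \<Rightarrow> ((nat\<Rightarrow>nat) \<Rightarrow> nat \<Rightarrow> nat) \<Rightarrow> (nat\<Rightarrow>nat) \<Rightarrow> nat \<Rightarrow> nat \<Rightarrow> nat" where
  "precf f g u x 0 = f u x"
| "precf f g u x (Suc n) = g u (pe x (pe n (precf f g u x n)))"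

lemma tc_prec: assumes "tc f" "tc g" shows "tc (\<lambda>u z. precf f g u (p1 z) (p2 z))"
proof -
  obtain pf where pf: "\<And>u x. eval (\<lambda>n. Some (u n)) pf x (f u x)" using assms(1) unfolding tc_def by blast
  obtain pg where pg: "\<And>u x. eval (\<lambda>n. Some (u n)) pg x (g u x)" using assms(2) unfolding tc_def by blast
  have "eval (\<lambda>n. Some (u n)) (RPrec pf pg) (pe x n) (precf f g u x n)" for u x n
    by (induction n) (auto intro: eval.intros pf pg)
  then have "eval (\<lambda>n. Some (u n)) (RPrec pf pg) z (precf f g u (p1 z) (p2 z))" for u z
    by (metis prod.collapse prod_decode_inverse)
  then show ?thesis unfolding tc_def by blast
qed

lemma tc_cong: assumes "tc f" "\<And>u x. f u x = g u x" shows "tc g"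
proof -
  have "f = g" using assms(2) by (intro ext)
  then show ?thesis using assms(1) by simp
qed

lemma tc_precI:
  assumes "tc f" "tc g" "tc a" "tc b" "\<And>u x. h u x = precf f g u (a u x) (b u x)"
  shows "tc h"
proof -
  have "tc (\<lambda>u x. (\<lambda>u z. precf f g u (p1 z) (p2 z)) u (pe (a u x) (b u x)))"
    by (rule tc_comp[OF tc_prec[OF assms(1,2)] tc_pe[OF assms(3,4)]])
  then show ?thesis by (rule tc_cong) (simp add: assms(5))
qed


lemma tc_add: assumes "tc f" "tc g" shows "tc (\<lambda>u x. f u x + g u x)"
proof (rule tc_precI[OF tc_id _ assms])
  show "tc (\<lambda>u w. Suc (p2 (p2 w)))" by (intro tc_Suc tc_p2 tc_id)
  fix u x
  have "precf (\<lambda>u x. x) (\<lambda>u w. Suc (p2 (p2 w))) u a n = a + n" for a n by (induction n) auto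
  then show "f u x + g u x = precf (\<lambda>u x. x) (\<lambda>u w. Suc (p2 (p2 w))) u (f u x) (g u x)" by simp
qed

lemma tc_pred: assumes "tc f" shows "tc (\<lambda>u x. f u x - 1)"
proof (rule tc_precI[OF tc_zero _ tc_zero assms])
  show "tc (\<lambda>u w. p1 (p2 w))" by (intro tc_p1 tc_p2 tc_id)
  fix u x
  have "precf (\<lambda>u x. 0) (\<lambda>u w. p1 (p2 w)) u a n = n - 1" for a n by (induction n) auto
  then show "f u x - 1 = precf (\<lambda>u x. 0) (\<lambda>u w. p1 (p2 w)) u 0 (f u x)" by simp
qed

lemma tc_sub: assumes "tc f" "tc g" shows "tc (\<lambda>u x. f u x - g u x)"
proof (rule tc_precI[OF tc_id _ assms])
  show "tc (\<lambda>u w. p2 (p2 w) - 1)" by (intro tc_pred tc_p2 tc_id)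
  fix u x
  have "precf (\<lambda>u x. x) (\<lambda>u w. p2 (p2 w) - 1) u a n = a - n" for a n by (induction n) auto
  then show "f u x - g u x = precf (\<lambda>u x. x) (\<lambda>u w. p2 (p2 w) - 1) u (f u x) (g u x)" by simp
qed

lemma tc_mult: assumes "tc f" "tc g" shows "tc (\<lambda>u x. f u x * g u x)"
proof (rule tc_precI[OF tc_zero _ assms])
  show "tc (\<lambda>u w. p2 (p2 w) + p1 w)" by (intro tc_add tc_p1 tc_p2 tc_id)
  fix u x
  have "precf (\<lambda>u x. 0) (\<lambda>u w. p2 (p2 w) + p1 w) u a n = a * n" for a n by (induction n) auto
  then show "f u x * g u x = precf (\<lambda>u x. 0) (\<lambda>u w. p2 (p2 w) + p1 w) u (f u x) (g u x)" by simp
qed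

definition tcP :: "((nat \<Rightarrow> nat) \<Rightarrow> nat \<Rightarrow> bool) \<Rightarrow> bool" where
  "tcP P \<longleftrightarrow> tc (\<lambda>u x. if P u x then 1 else 0)"

lemma tc_if: assumes "tcP P" "tc f" "tc g" shows "tc (\<lambda>u x. if P u x then f u x else g u x)"
proof (rule tc_precI[OF _ _ tc_pe[OF assms(2,3)] assms(1)[unfolded tcP_def]])
  show "tc (\<lambda>u y. p2 y)" by (intro tc_p2 tc_id)
  show "tc (\<lambda>u w. p1 (p1 w))" by (intro tc_p1 tc_id)
qed simp

lemma tcP_eq: assumes "tc f" "tc g" shows "tcP (\<lambda>u x. f u x = g u x)"
  unfolding tcP_def
  by (rule tc_cong[OF tc_sub[OF tc_const tc_add[OF tc_sub[OF assms] tc_sub[OF assms(2,1)]]], of 1]) auto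

lemma tcP_less: assumes "tc f" "tc g" shows "tcP (\<lambda>u x. f u x < g u x)"
  unfolding tcP_def
  by (rule tc_cong[OF tc_sub[OF tc_const tc_sub[OF tc_const tc_sub[OF assms(2,1)]]], of 1 1]) auto

lemma tcP_not: assumes "tcP P" shows "tcP (\<lambda>u x. \<not> P u x)"
  using assms unfolding tcP_def
  by (rule tc_cong[OF tc_sub[OF tc_const], of _ 1]) auto

lemma tcP_conj: assumes "tcP P" "tcP Q" shows "tcP (\<lambda>u x. P u x \<and> Q u x)"
  using tc_mult[OF assms[unfolded tcP_def]] unfolding tcP_def
  by (rule tc_cong) auto

lemma tcP_cong: assumes "tcP P" "\<And>u x. P u x = Q u x" shows "tcP Q"
proof -
  have "P = Q" using assms(2) by (intro ext)
  then show ?thesis using assms(1) by simp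
qed

lemma tcP_disj: assumes "tcP P" "tcP Q" shows "tcP (\<lambda>u x. P u x \<or> Q u x)"
  by (rule tcP_cong[OF tcP_not[OF tcP_conj[OF tcP_not[OF assms(1)] tcP_not[OF assms(2)]]]]) auto

lemma tcP_imp: assumes "tcP P" "tcP Q" shows "tcP (\<lambda>u x. P u x \<longrightarrow> Q u x)"
  by (rule tcP_cong[OF tcP_disj[OF tcP_not[OF assms(1)] assms(2)]]) auto

lemma tcP_le: assumes "tc f" "tc g" shows "tcP (\<lambda>u x. f u x \<le> g u x)"
  by (rule tcP_cong[OF tcP_not[OF tcP_less[OF assms(2,1)]]]) auto

lemma tcP_True: "tcP (\<lambda>u x. True)" unfolding tcP_def by (simp add: tc_const)
lemma tcP_False: "tcP (\<lambda>u x. False)" unfolding tcP_def by (simp add: tc_const)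

lemma tcP_comp: "tcP P \<Longrightarrow> tc f \<Longrightarrow> tcP (\<lambda>u x. P u (f u x))"
  unfolding tcP_def by (drule tc_comp) auto

lemma tcP_bex:
  assumes P: "tcP (\<lambda>u z. P u (p1 z) (p2 z))" and n: "tc n"
  shows "tcP (\<lambda>u x. \<exists>i<n u x. P u x i)"
proof -
  let ?g = "\<lambda>u w. if P u (p1 w) (p1 (p2 w)) \<or> p2 (p2 w) = 1 then 1 else 0"
  have g: "tc ?g"
  proof -
    have "tcP (\<lambda>u w. P u (p1 w) (p1 (p2 w)))"
      using tcP_comp[OF P tc_pe[OF tc_p1[OF tc_id] tc_p1[OF tc_p2[OF tc_id]]]] by simp
    then show ?thesis
      by (intro tc_if tcP_disj tcP_eq tc_const tc_p2 tc_id)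
  qed
  have "precf (\<lambda>u x. 0) ?g u x m = (if \<exists>i<m. P u x i then 1 else 0)" for u x m
    by (induction m) (auto simp: less_Suc_eq)
  then show ?thesis unfolding tcP_def
    by (intro tc_precI[OF tc_zero g tc_id n]) simp
qed

lemma tcP_ball:
  assumes P: "tcP (\<lambda>u z. P u (p1 z) (p2 z))" and n: "tc n"
  shows "tcP (\<lambda>u x. \<forall>i<n u x. P u x i)"
proof -
  have "tcP (\<lambda>u x. \<not> (\<exists>i<n u x. \<not> P u x i))"
    by (intro tcP_not tcP_bex[OF tcP_not[OF P] n])
  then show ?thesis by (rule tcP_cong) auto
qed

lemma tc_mod: assumes "tc f" "tc g" shows "tc (\<lambda>u x. f u x mod g u x)"
proof -
  let ?g = "\<lambda>u w. if Suc (p2 (p2 w)) = p1 w then 0 else Suc (p2 (p2 w))"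
  have g: "tc ?g" by (intro tc_if tcP_eq tc_const tc_Suc tc_p1 tc_p2 tc_id)
  have "precf (\<lambda>u x. 0) ?g u d m = m mod d" for u d m
    by (induction m) (auto simp: mod_Suc)
  then show ?thesis
    by (intro tc_precI[OF tc_zero g assms(2) assms(1)]) simp
qed

lemma tc_div: assumes "tc f" "tc g" shows "tc (\<lambda>u x. f u x div g u x)"
proof -
  let ?g = "\<lambda>u w. if Suc (p1 (p2 w)) mod p1 w = 0 then Suc (p2 (p2 w)) else p2 (p2 w)"
  have g: "tc ?g" by (intro tc_if tcP_eq tc_mod tc_const tc_Suc tc_p1 tc_p2 tc_id)
  have "precf (\<lambda>u x. 0) ?g u d m = m div d" for u d m
    by (induction m) (auto simp: div_Suc)
  then show ?thesis
    by (intro tc_precI[OF tc_zero g assms(2) assms(1)]) simp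
qed

abbreviation tln :: "nat \<Rightarrow> nat" where "tln L \<equiv> p2 (L - 1)"
abbreviation hdn :: "nat \<Rightarrow> nat" where "hdn L \<equiv> p1 (L - 1)"

definition dropn :: "nat \<Rightarrow> nat \<Rightarrow> nat" where "dropn L i = ((\<lambda>L. tln L) ^^ i) L"

lemma dropn_Suc: "dropn L (Suc i) = tln (dropn L i)"
  unfolding dropn_def by simp

lemma tc_dropn: assumes "tc f" "tc g" shows "tc (\<lambda>u x. dropn (f u x) (g u x))"
proof -
  have g: "tc (\<lambda>u w. tln (p2 (p2 w)))" by (intro tc_p2 tc_pred tc_id)
  have "precf (\<lambda>u x. x) (\<lambda>u w. tln (p2 (p2 w))) u L i = dropn L i" for u L i
    by (induction i) (auto simp: dropn_Suc, simp add: dropn_def)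
  then show ?thesis by (intro tc_precI[OF tc_id g assms]) simp
qed

lemma prod_decode_0: "prod_decode 0 = (0, 0)"
proof -
  have "prod_encode (0, 0) = 0" by (simp add: prod_encode_def)
  then show ?thesis by (metis prod_encode_inverse)
qed

lemma tln_list: "tln (list_encode l) = list_encode (tl l)"
  by (cases l) (auto simp: prod_decode_0)

lemma hdn_list: "l \<noteq> [] \<Longrightarrow> hdn (list_encode l) = hd l"
  by (cases l) auto

lemma tln_list': "p2 (list_encode l - Suc 0) = list_encode (tl l)"
  by (cases l) (auto simp: prod_decode_0)

lemma hdn_list': "l \<noteq> [] \<Longrightarrow> p1 (list_encode l - Suc 0) = hd l"
  by (cases l) auto

lemma dropn_list: "dropn (list_encode l) i = list_encode (drop i l)"
proof (induction i)
  case (Suc i)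
  have "dropn (list_encode l) (Suc i) = tln (list_encode (drop i l))" using Suc.IH dropn_Suc by simp
  also have "\<dots> = list_encode (tl (drop i l))" by (rule tln_list)
  finally show ?case by (simp add: drop_Suc tl_drop)
qed (simp add: dropn_def)

lemma list_encode_0: "list_encode l = 0 \<longleftrightarrow> l = []"
  by (cases l) auto

lemma length_le_list_encode: "length l \<le> list_encode l"
proof (induction l)
  case (Cons a l)
  then show ?case using le_prod_encode_2[of "list_encode l" a] by simp
qed simp

definition hasn :: "(nat \<Rightarrow> bool) \<Rightarrow> nat \<Rightarrow> bool" where
  "hasn P L \<longleftrightarrow> (\<exists>j<L. dropn L j \<noteq> 0 \<and> P (hdn (dropn L j)))"

lemma hasn_list: "hasn P (list_encode l) \<longleftrightarrow> (\<exists>b\<in>set l. P b)"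
proof
  assume "hasn P (list_encode l)"
  then obtain j where "drop j l \<noteq> []" "P (hd (drop j l))"
    unfolding hasn_def dropn_list list_encode_0 by (auto simp: hdn_list hdn_list')
  then show "\<exists>b\<in>set l. P b" by (metis hd_drop_conv_nth drop_eq_Nil not_le nth_mem)
next
  assume "\<exists>b\<in>set l. P b"
  then obtain j where j: "j < length l" "P (l ! j)" by (metis in_set_conv_nth)
  then have "drop j l \<noteq> []" "hd (drop j l) = l ! j" by (auto simp: hd_drop_conv_nth)
  moreover have "j < list_encode l" using j length_le_list_encode[of l] by linarith
  moreover have "hdn (list_encode (drop j l)) = l ! j"
    using calculation hdn_list'[of "drop j l"] by simp
  ultimately show "hasn P (list_encode l)"
    unfolding hasn_def dropn_list list_encode_0 using j by metis
qed

text \<open>Entries of a certificate: pe code (pe input (pe output aux)).\<close>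

definition justG :: "(nat \<Rightarrow> nat) \<Rightarrow> ((nat \<Rightarrow> bool) \<Rightarrow> bool) \<Rightarrow> nat \<Rightarrow> bool" where
  "justG u H a \<longleftrightarrow>
     (p1 a mod 10 = 0 \<and> p1 (p2 (p2 a)) = 0)
   \<or> (p1 a mod 10 = 1 \<and> p1 (p2 (p2 a)) = Suc (p1 (p2 a)))
   \<or> (p1 a mod 10 = 2 \<and> p1 (p2 (p2 a)) = p1 (p2 a))
   \<or> (p1 a mod 10 = 3 \<and> p1 (p2 (p2 a)) = p1 (p1 (p2 a)))
   \<or> (p1 a mod 10 = 4 \<and> p1 (p2 (p2 a)) = p2 (p1 (p2 a)))
   \<or> (p1 a mod 10 = 5 \<and> p1 (p2 (p2 a)) = u (p1 (p2 a)))
   \<or> (p1 a mod 10 = 6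
       \<and> H (\<lambda>b. p1 b = p2 (p1 a div 10) \<and> p1 (p2 b) = p1 (p2 a) \<and> p1 (p2 (p2 b)) = p2 (p2 (p2 a)))
       \<and> H (\<lambda>b. p1 b = p1 (p1 a div 10) \<and> p1 (p2 b) = p2 (p2 (p2 a)) \<and> p1 (p2 (p2 b)) = p1 (p2 (p2 a))))
   \<or> (p1 a mod 10 = 7
       \<and> H (\<lambda>b. p1 b = p1 (p1 a div 10) \<and> p1 (p2 b) = p1 (p2 a) \<and> p1 (p2 (p2 b)) = p1 (p1 (p2 (p2 a))))
       \<and> H (\<lambda>b. p1 b = p2 (p1 a div 10) \<and> p1 (p2 b) = p1 (p2 a) \<and> p1 (p2 (p2 b)) = p2 (p1 (p2 (p2 a)))))
   \<or> (p1 a mod 10 = 8 \<and> p2 (p1 (p2 a)) = 0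
       \<and> H (\<lambda>b. p1 b = p1 (p1 a div 10) \<and> p1 (p2 b) = p1 (p1 (p2 a)) \<and> p1 (p2 (p2 b)) = p1 (p2 (p2 a))))
   \<or> (p1 a mod 10 = 8 \<and> p2 (p1 (p2 a)) \<noteq> 0
       \<and> H (\<lambda>b. p1 b = p1 a \<and> p1 (p2 b) = pe (p1 (p1 (p2 a))) (p2 (p1 (p2 a)) - 1)
               \<and> p1 (p2 (p2 b)) = p2 (p2 (p2 a)))
       \<and> H (\<lambda>b. p1 b = p2 (p1 a div 10)
               \<and> p1 (p2 b) = pe (p1 (p1 (p2 a))) (pe (p2 (p1 (p2 a)) - 1) (p2 (p2 (p2 a))))
               \<and> p1 (p2 (p2 b)) = p1 (p2 (p2 a))))
   \<or> (p1 a mod 10 = 9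
       \<and> H (\<lambda>b. p1 b = p1 a div 10 \<and> p1 (p2 b) = pe (p1 (p2 a)) (p1 (p2 (p2 a))) \<and> p1 (p2 (p2 b)) = 0)
       \<and> (\<forall>i<p1 (p2 (p2 a)). H (\<lambda>b. p1 b = p1 a div 10 \<and> p1 (p2 b) = pe (p1 (p2 a)) i \<and> p1 (p2 (p2 b)) \<noteq> 0)))"

definition validn :: "(nat \<Rightarrow> nat) \<Rightarrow> nat \<Rightarrow> bool" where
  "validn u L \<longleftrightarrow> (\<forall>i<L. dropn L i \<noteq> 0 \<longrightarrow> justG u (\<lambda>P. hasn P (tln (dropn L i))) (hdn (dropn L i)))"

definition check :: "(nat \<Rightarrow> nat) \<Rightarrow> nat \<Rightarrow> bool" where
  "check u z \<longleftrightarrow> validn u (p2 (p2 z)) \<and> p2 (p2 z) \<noteq> 0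
     \<and> p1 (hdn (p2 (p2 z))) = p1 (p1 z) \<and> p1 (p2 (hdn (p2 (p2 z)))) = p2 (p1 z)
     \<and> p1 (p2 (p2 (hdn (p2 (p2 z))))) = p1 (p2 z)"

lemmas tc_intros = tc_id tc_const tc_Suc tc_p1 tc_p2 tc_orc tc_pe tc_add tc_sub tc_mult tc_mod tc_div
  tc_if tc_dropn tcP_eq tcP_less tcP_le tcP_not tcP_conj tcP_disj tcP_imp tcP_True tcP_False
  tcP_bex tcP_ball

lemma tc_check: "tcP check"
  unfolding check_def validn_def justG_def hasn_def
  by (intro tc_intros)

lemma decode_0: "c mod 10 = 0 \<Longrightarrow> decode c = RZero" by (subst decode.simps) simp
lemma decode_1: "c mod 10 = 1 \<Longrightarrow> decode c = RSuc" by (subst decode.simps) simp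
lemma decode_2: "c mod 10 = 2 \<Longrightarrow> decode c = RId" by (subst decode.simps) simp
lemma decode_3: "c mod 10 = 3 \<Longrightarrow> decode c = RFst" by (subst decode.simps) simp
lemma decode_4: "c mod 10 = 4 \<Longrightarrow> decode c = RSnd" by (subst decode.simps) simp
lemma decode_5: "c mod 10 = 5 \<Longrightarrow> decode c = ROrc" by (subst decode.simps) simp
lemma decode_6: "c mod 10 = 6 \<Longrightarrow> decode c = RComp (decode (p1 (c div 10))) (decode (p2 (c div 10)))"
  by (subst decode.simps) (simp add: Let_def)
lemma decode_7: "c mod 10 = 7 \<Longrightarrow> decode c = RPair (decode (p1 (c div 10))) (decode (p2 (c div 10)))"
  by (subst decode.simps) (simp add: Let_def)
lemma decode_8: "c mod 10 = 8 \<Longrightarrow> decode c = RPrec (decode (p1 (c div 10))) (decode (p2 (c div 10)))"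
  by (subst decode.simps) (simp add: Let_def)
lemma decode_9: "c mod 10 = 9 \<Longrightarrow> decode c = RMn (decode (c div 10))"
proof -
  assume "c mod 10 = 9"
  then show ?thesis by (subst decode.simps) simp
qed

lemmas decode_n = decode_0 decode_1 decode_2 decode_3 decode_4 decode_5 decode_6 decode_7 decode_8 decode_9

lemma mod10_cases: "(c::nat) mod 10 = 0 \<or> c mod 10 = 1 \<or> c mod 10 = 2 \<or> c mod 10 = 3 \<or> c mod 10 = 4
  \<or> c mod 10 = 5 \<or> c mod 10 = 6 \<or> c mod 10 = 7 \<or> c mod 10 = 8 \<or> c mod 10 = 9" by presburger

lemma decode_inv:
  "decode c = RZero \<Longrightarrow> c mod 10 = 0"
  "decode c = RSuc \<Longrightarrow> c mod 10 = 1"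
  "decode c = RId \<Longrightarrow> c mod 10 = 2"
  "decode c = RFst \<Longrightarrow> c mod 10 = 3"
  "decode c = RSnd \<Longrightarrow> c mod 10 = 4"
  "decode c = ROrc \<Longrightarrow> c mod 10 = 5"
  "decode c = RComp f g \<Longrightarrow> c mod 10 = 6 \<and> f = decode (p1 (c div 10)) \<and> g = decode (p2 (c div 10))"
  "decode c = RPair f g \<Longrightarrow> c mod 10 = 7 \<and> f = decode (p1 (c div 10)) \<and> g = decode (p2 (c div 10))"
  "decode c = RPrec f g \<Longrightarrow> c mod 10 = 8 \<and> f = decode (p1 (c div 10)) \<and> g = decode (p2 (c div 10))"
  "decode c = RMn f \<Longrightarrow> c mod 10 = 9 \<and> f = decode (c div 10)"
  using mod10_cases[of c] decode_n[of c] by (elim disjE; simp)+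

fun valid_list :: "(nat \<Rightarrow> nat) \<Rightarrow> nat list \<Rightarrow> bool" where
  "valid_list u [] = True"
| "valid_list u (a # l) = (justG u (\<lambda>P. \<exists>b\<in>set l. P b) a \<and> valid_list u l)"

lemma justG_mono: assumes "justG u H a" "\<And>P. H P \<Longrightarrow> H' P" shows "justG u H' a"
  using assms(1) unfolding justG_def by (elim disjE conjE) (simp_all add: assms(2))

lemma valid_list_nth:
  "valid_list u l \<longleftrightarrow> (\<forall>i<length l. justG u (\<lambda>P. \<exists>b\<in>set (drop (Suc i) l). P b) (l ! i))"
proof (induction l)
  case (Cons a l)
  show ?case
    unfolding valid_list.simps Cons.IH
    by (auto simp: less_Suc_eq_0_disj)
qed simp

lemma validn_list: "validn u (list_encode l) \<longleftrightarrow> valid_list u l"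
proof -
  have "validn u (list_encode l) \<longleftrightarrow>
      (\<forall>i<list_encode l. drop i l \<noteq> [] \<longrightarrow> justG u (\<lambda>P. \<exists>b\<in>set (tl (drop i l)). P b) (hd (drop i l)))"
    unfolding validn_def dropn_list list_encode_0 tln_list hasn_list
    by (simp add: hdn_list' tln_list' hasn_list)
  also have "\<dots> \<longleftrightarrow> (\<forall>i<length l. justG u (\<lambda>P. \<exists>b\<in>set (drop (Suc i) l). P b) (l ! i))"
  proof (intro iffI allI impI)
    fix i assume A: "\<forall>i<list_encode l. drop i l \<noteq> [] \<longrightarrow> justG u (\<lambda>P. \<exists>b\<in>set (tl (drop i l)). P b) (hd (drop i l))"
      and i: "i < length l"
    then have "i < list_encode l" "drop i l \<noteq> []" using length_le_list_encode[of l] by auto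
    with A have "justG u (\<lambda>P. \<exists>b\<in>set (tl (drop i l)). P b) (hd (drop i l))" by blast
    moreover have "hd (drop i l) = l ! i" "tl (drop i l) = drop (Suc i) l"
      using i by (auto simp: hd_drop_conv_nth drop_Suc tl_drop)
    ultimately show "justG u (\<lambda>P. \<exists>b\<in>set (drop (Suc i) l). P b) (l ! i)" by simp
  next
    fix i assume A: "\<forall>i<length l. justG u (\<lambda>P. \<exists>b\<in>set (drop (Suc i) l). P b) (l ! i)"
      and "i < list_encode l" "drop i l \<noteq> []"
    then have i: "i < length l" by simp
    with A have "justG u (\<lambda>P. \<exists>b\<in>set (drop (Suc i) l). P b) (l ! i)" by blast
    moreover have "hd (drop i l) = l ! i" "tl (drop i l) = drop (Suc i) l"
      using i by (auto simp: hd_drop_conv_nth drop_Suc tl_drop)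
    ultimately show "justG u (\<lambda>P. \<exists>b\<in>set (tl (drop i l)). P b) (hd (drop i l))" by simp
  qed
  finally show ?thesis using valid_list_nth by simp
qed

lemma valid_append: "valid_list u l1 \<Longrightarrow> valid_list u l2 \<Longrightarrow> valid_list u (l1 @ l2)"
proof (induction l1)
  case (Cons a l1)
  then have "justG u (\<lambda>P. \<exists>b\<in>set l1. P b) a" by simp
  then have "justG u (\<lambda>P. \<exists>b\<in>set (l1 @ l2). P b) a" by (rule justG_mono) auto
  then show ?case using Cons by simp
qed simp

lemma sound:
  assumes "valid_list u l" "b \<in> set l"
  shows "eval (\<lambda>n. Some (u n)) (decode (p1 b)) (p1 (p2 b)) (p1 (p2 (p2 b)))"
  using assms
proof (induction l arbitrary: b)
  case (Cons a l)
  let ?E = "\<lambda>b. eval (\<lambda>n. Some (u n)) (decode (p1 b)) (p1 (p2 b)) (p1 (p2 (p2 b)))"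
  have IH: "\<And>b. b \<in> set l \<Longrightarrow> ?E b" using Cons by auto
  have J: "justG u (\<lambda>P. \<exists>b\<in>set l. P b) a" using Cons.prems by simp
  have "?E a"
    using J unfolding justG_def
  proof (elim disjE conjE)
    assume "p1 a mod 10 = 6"
      and H1: "\<exists>b\<in>set l. p1 b = p2 (p1 a div 10) \<and> p1 (p2 b) = p1 (p2 a) \<and> p1 (p2 (p2 b)) = p2 (p2 (p2 a))"
      and H2: "\<exists>b\<in>set l. p1 b = p1 (p1 a div 10) \<and> p1 (p2 b) = p2 (p2 (p2 a)) \<and> p1 (p2 (p2 b)) = p1 (p2 (p2 a))"
    then obtain b1 b2 where "b1 \<in> set l" "b2 \<in> set l"
      "p1 b1 = p2 (p1 a div 10)" "p1 (p2 b1) = p1 (p2 a)" "p1 (p2 (p2 b1)) = p2 (p2 (p2 a))"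
      "p1 b2 = p1 (p1 a div 10)" "p1 (p2 b2) = p2 (p2 (p2 a))" "p1 (p2 (p2 b2)) = p1 (p2 (p2 a))"
      by blast
    with IH have "eval (\<lambda>n. Some (u n)) (RComp (decode (p1 (p1 a div 10))) (decode (p2 (p1 a div 10)))) (p1 (p2 a))
        (p1 (p2 (p2 a)))"
      by (metis eval.intros(7))
    then show "?E a" using \<open>p1 a mod 10 = 6\<close> by (simp add: decode_6)
  next
    assume "p1 a mod 10 = 7"
      and H1: "\<exists>b\<in>set l. p1 b = p1 (p1 a div 10) \<and> p1 (p2 b) = p1 (p2 a) \<and> p1 (p2 (p2 b)) = p1 (p1 (p2 (p2 a)))"
      and H2: "\<exists>b\<in>set l. p1 b = p2 (p1 a div 10) \<and> p1 (p2 b) = p1 (p2 a) \<and> p1 (p2 (p2 b)) = p2 (p1 (p2 (p2 a)))"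
    then obtain b1 b2 where "b1 \<in> set l" "b2 \<in> set l"
      "p1 b1 = p1 (p1 a div 10)" "p1 (p2 b1) = p1 (p2 a)" "p1 (p2 (p2 b1)) = p1 (p1 (p2 (p2 a)))"
      "p1 b2 = p2 (p1 a div 10)" "p1 (p2 b2) = p1 (p2 a)" "p1 (p2 (p2 b2)) = p2 (p1 (p2 (p2 a)))"
      by blast
    with IH have "eval (\<lambda>n. Some (u n)) (RPair (decode (p1 (p1 a div 10))) (decode (p2 (p1 a div 10)))) (p1 (p2 a))
        (pe (p1 (p1 (p2 (p2 a)))) (p2 (p1 (p2 (p2 a)))))"
      by (metis eval.intros(8))
    then show "?E a" using \<open>p1 a mod 10 = 7\<close> by (simp add: decode_7)
  next
    assume "p1 a mod 10 = 8" "p2 (p1 (p2 a)) = 0"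
      and H1: "\<exists>b\<in>set l. p1 b = p1 (p1 a div 10) \<and> p1 (p2 b) = p1 (p1 (p2 a)) \<and> p1 (p2 (p2 b)) = p1 (p2 (p2 a))"
    then obtain b1 where "b1 \<in> set l"
      "p1 b1 = p1 (p1 a div 10)" "p1 (p2 b1) = p1 (p1 (p2 a))" "p1 (p2 (p2 b1)) = p1 (p2 (p2 a))" by blast
    with IH have "eval (\<lambda>n. Some (u n)) (RPrec (decode (p1 (p1 a div 10))) (decode (p2 (p1 a div 10))))
       (pe (p1 (p1 (p2 a))) 0) (p1 (p2 (p2 a)))"
      by (metis eval.intros(9))
    then show "?E a" using \<open>p1 a mod 10 = 8\<close> \<open>p2 (p1 (p2 a)) = 0\<close>
      by (simp add: decode_8) (metis prod.collapse prod_decode_inverse)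
  next
    assume "p1 a mod 10 = 8" "p2 (p1 (p2 a)) \<noteq> 0"
      and H1: "\<exists>b\<in>set l. p1 b = p1 a \<and> p1 (p2 b) = pe (p1 (p1 (p2 a))) (p2 (p1 (p2 a)) - 1)
               \<and> p1 (p2 (p2 b)) = p2 (p2 (p2 a))"
      and H2: "\<exists>b\<in>set l. p1 b = p2 (p1 a div 10)
               \<and> p1 (p2 b) = pe (p1 (p1 (p2 a))) (pe (p2 (p1 (p2 a)) - 1) (p2 (p2 (p2 a))))
               \<and> p1 (p2 (p2 b)) = p1 (p2 (p2 a))"
    then obtain b1 b2 where "b1 \<in> set l" "b2 \<in> set l"
      "p1 b1 = p1 a" "p1 (p2 b1) = pe (p1 (p1 (p2 a))) (p2 (p1 (p2 a)) - 1)" "p1 (p2 (p2 b1)) = p2 (p2 (p2 a))"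
      "p1 b2 = p2 (p1 a div 10)" "p1 (p2 b2) = pe (p1 (p1 (p2 a))) (pe (p2 (p1 (p2 a)) - 1) (p2 (p2 (p2 a))))"
      "p1 (p2 (p2 b2)) = p1 (p2 (p2 a))"
      by blast
    with IH have e1: "eval (\<lambda>n. Some (u n)) (decode (p1 a)) (pe (p1 (p1 (p2 a))) (p2 (p1 (p2 a)) - 1)) (p2 (p2 (p2 a)))"
      and e2: "eval (\<lambda>n. Some (u n)) (decode (p2 (p1 a div 10))) (pe (p1 (p1 (p2 a))) (pe (p2 (p1 (p2 a)) - 1) (p2 (p2 (p2 a))))) (p1 (p2 (p2 a)))"
      by metis+
    have d: "decode (p1 a) = RPrec (decode (p1 (p1 a div 10))) (decode (p2 (p1 a div 10)))"
      using \<open>p1 a mod 10 = 8\<close> by (simp add: decode_8)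
    have "eval (\<lambda>n. Some (u n)) (decode (p1 a)) (pe (p1 (p1 (p2 a))) (Suc (p2 (p1 (p2 a)) - 1))) (p1 (p2 (p2 a)))"
      using e1 e2 unfolding d by (rule eval.intros(10))
    moreover have "pe (p1 (p1 (p2 a))) (Suc (p2 (p1 (p2 a)) - 1)) = p1 (p2 a)"
      using \<open>p2 (p1 (p2 a)) \<noteq> 0\<close> by simp
    ultimately show "?E a" by simp
  next
    assume "p1 a mod 10 = 9"
      and H1: "\<exists>b\<in>set l. p1 b = p1 a div 10 \<and> p1 (p2 b) = pe (p1 (p2 a)) (p1 (p2 (p2 a))) \<and> p1 (p2 (p2 b)) = 0"
      and H2: "\<forall>i<p1 (p2 (p2 a)). \<exists>b\<in>set l. p1 b = p1 a div 10 \<and> p1 (p2 b) = pe (p1 (p2 a)) i \<and> p1 (p2 (p2 b)) \<noteq> 0"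
    from H1 IH have "eval (\<lambda>n. Some (u n)) (decode (p1 a div 10)) (pe (p1 (p2 a)) (p1 (p2 (p2 a)))) 0" by metis
    moreover from H2 IH have "\<forall>m<p1 (p2 (p2 a)). \<exists>k. k \<noteq> 0 \<and> eval (\<lambda>n. Some (u n)) (decode (p1 a div 10)) (pe (p1 (p2 a)) m) k"
      by metis
    ultimately show "?E a" using \<open>p1 a mod 10 = 9\<close> by (simp add: decode_9 eval.intros(11))
  qed (auto simp: decode_n intro!: eval.intros)
  then show ?case using Cons by auto
qed simp

lemma justG_comp: "k mod 10 = 6 \<Longrightarrow> H (\<lambda>b. p1 b = p2 (k div 10) \<and> p1 (p2 b) = x \<and> p1 (p2 (p2 b)) = m)
  \<Longrightarrow> H (\<lambda>b. p1 b = p1 (k div 10) \<and> p1 (p2 b) = m \<and> p1 (p2 (p2 b)) = y)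
  \<Longrightarrow> justG u H (pe k (pe x (pe y m)))"
  by (simp add: justG_def)

lemma justG_pair: "k mod 10 = 7 \<Longrightarrow> H (\<lambda>b. p1 b = p1 (k div 10) \<and> p1 (p2 b) = x \<and> p1 (p2 (p2 b)) = a)
  \<Longrightarrow> H (\<lambda>b. p1 b = p2 (k div 10) \<and> p1 (p2 b) = x \<and> p1 (p2 (p2 b)) = c)
  \<Longrightarrow> justG u H (pe k (pe x (pe (pe a c) m)))"
  by (simp add: justG_def)

lemma justG_prec0: "k mod 10 = 8 \<Longrightarrow> H (\<lambda>b. p1 b = p1 (k div 10) \<and> p1 (p2 b) = x \<and> p1 (p2 (p2 b)) = y)
  \<Longrightarrow> justG u H (pe k (pe (pe x 0) (pe y m)))"
  by (simp add: justG_def)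

lemma justG_precS: "k mod 10 = 8 \<Longrightarrow> H (\<lambda>b. p1 b = k \<and> p1 (p2 b) = pe x n \<and> p1 (p2 (p2 b)) = m)
  \<Longrightarrow> H (\<lambda>b. p1 b = p2 (k div 10) \<and> p1 (p2 b) = pe x (pe n m) \<and> p1 (p2 (p2 b)) = z)
  \<Longrightarrow> justG u H (pe k (pe (pe x (Suc n)) (pe z m)))"
  by (simp add: justG_def)

lemma justG_mn: "k mod 10 = 9 \<Longrightarrow> H (\<lambda>b. p1 b = k div 10 \<and> p1 (p2 b) = pe x n \<and> p1 (p2 (p2 b)) = 0)
  \<Longrightarrow> (\<forall>i<n. H (\<lambda>b. p1 b = k div 10 \<and> p1 (p2 b) = pe x i \<and> p1 (p2 (p2 b)) \<noteq> 0))
  \<Longrightarrow> justG u H (pe k (pe x (pe n m)))"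
  by (simp add: justG_def)

lemma collect:
  assumes "\<forall>i<n. \<exists>kk. kk \<noteq> 0 \<and> (\<exists>m l. valid_list u (pe c (pe (pe x i) (pe kk m)) # l))"
  shows "\<exists>l. valid_list u l \<and> (\<forall>i<n. \<exists>b\<in>set l. p1 b = c \<and> p1 (p2 b) = pe x i \<and> p1 (p2 (p2 b)) \<noteq> 0)"
  using assms
proof (induction n)
  case 0
  then show ?case by (intro exI[of _ "[]"]) simp
next
  case (Suc n)
  then obtain l where l: "valid_list u l" "\<forall>i<n. \<exists>b\<in>set l. p1 b = c \<and> p1 (p2 b) = pe x i \<and> p1 (p2 (p2 b)) \<noteq> 0"
    by auto
  from Suc.prems obtain kk m l' where kk: "kk \<noteq> 0" "valid_list u (pe c (pe (pe x n) (pe kk m)) # l')"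
    by auto
  have "valid_list u (l @ (pe c (pe (pe x n) (pe kk m)) # l'))" by (rule valid_append[OF l(1) kk(2)])
  moreover have "\<forall>i<Suc n. \<exists>b\<in>set (l @ (pe c (pe (pe x n) (pe kk m)) # l')). p1 b = c \<and> p1 (p2 b) = pe x i \<and> p1 (p2 (p2 b)) \<noteq> 0"
  proof (intro allI impI)
    fix i assume "i < Suc n"
    then consider "i < n" | "i = n" by linarith
    then show "\<exists>b\<in>set (l @ (pe c (pe (pe x n) (pe kk m)) # l')). p1 b = c \<and> p1 (p2 b) = pe x i \<and> p1 (p2 (p2 b)) \<noteq> 0"
    proof cases
      case 1 then show ?thesis using l(2) by auto
    next
      case 2 then show ?thesis using kk(1) by auto
    qed
  qed
  ultimately show ?case by blast
qed

lemma complete: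
  assumes "eval (\<lambda>n. Some (u n)) p x y"
  shows "\<forall>k. decode k = p \<longrightarrow> (\<exists>m l. valid_list u (pe k (pe x (pe y m)) # l))"
  using assms
proof (induction rule: eval.induct)
  case (ev_zero x)
  show ?case by (auto dest!: decode_inv intro!: exI[of _ "[]"] simp: justG_def)
next
  case (ev_suc x)
  show ?case by (auto dest!: decode_inv intro!: exI[of _ "[]"] simp: justG_def)
next
  case (ev_id x)
  show ?case by (auto dest!: decode_inv intro!: exI[of _ "[]"] simp: justG_def)
next
  case (ev_fst x)
  show ?case by (auto dest!: decode_inv intro!: exI[of _ "[]"] simp: justG_def)
next
  case (ev_snd x)
  show ?case by (auto dest!: decode_inv intro!: exI[of _ "[]"] simp: justG_def)
next
  case (ev_orc x y)
  then show ?case by (auto dest!: decode_inv intro!: exI[of _ "[]"] simp: justG_def)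
next
  case (ev_comp g x y f z)
  show ?case
  proof (intro allI impI)
    fix k assume "decode k = RComp f g"
    then have k: "k mod 10 = 6" "f = decode (p1 (k div 10))" "g = decode (p2 (k div 10))"
      using decode_inv(7) by blast+
    obtain m1 l1 where V1: "valid_list u (pe (p2 (k div 10)) (pe x (pe y m1)) # l1)" using ev_comp.IH(1) k by blast
    obtain m2 l2 where V2: "valid_list u (pe (p1 (k div 10)) (pe y (pe z m2)) # l2)" using ev_comp.IH(2) k by blast
    let ?L = "(pe (p2 (k div 10)) (pe x (pe y m1)) # l1) @ (pe (p1 (k div 10)) (pe y (pe z m2)) # l2)"
    have "valid_list u ?L" by (rule valid_append[OF V1 V2])
    moreover have "justG u (\<lambda>P. \<exists>b\<in>set ?L. P b) (pe k (pe x (pe z y)))"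
      by (rule justG_comp[OF k(1)]) auto
    ultimately have "valid_list u (pe k (pe x (pe z y)) # ?L)" by (simp only: valid_list.simps)
    then show "\<exists>m l. valid_list u (pe k (pe x (pe z m)) # l)" by blast
  qed
next
  case (ev_pair f x a g b)
  show ?case
  proof (intro allI impI)
    fix k assume "decode k = RPair f g"
    then have k: "k mod 10 = 7" "f = decode (p1 (k div 10))" "g = decode (p2 (k div 10))"
      using decode_inv(8) by blast+
    obtain m1 l1 where V1: "valid_list u (pe (p1 (k div 10)) (pe x (pe a m1)) # l1)" using ev_pair.IH(1) k by blast
    obtain m2 l2 where V2: "valid_list u (pe (p2 (k div 10)) (pe x (pe b m2)) # l2)" using ev_pair.IH(2) k by blast
    let ?L = "(pe (p1 (k div 10)) (pe x (pe a m1)) # l1) @ (pe (p2 (k div 10)) (pe x (pe b m2)) # l2)"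
    have "valid_list u ?L" by (rule valid_append[OF V1 V2])
    moreover have "justG u (\<lambda>P. \<exists>b\<in>set ?L. P b) (pe k (pe x (pe (pe a b) 0)))"
      by (rule justG_pair[OF k(1)]) auto
    ultimately have "valid_list u (pe k (pe x (pe (pe a b) 0)) # ?L)" by (simp only: valid_list.simps)
    then show "\<exists>m l. valid_list u (pe k (pe x (pe (pe a b) m)) # l)" by blast
  qed
next
  case (ev_prec0 f x y g)
  show ?case
  proof (intro allI impI)
    fix k assume "decode k = RPrec f g"
    then have k: "k mod 10 = 8" "f = decode (p1 (k div 10))" "g = decode (p2 (k div 10))"
      using decode_inv(9) by blast+
    obtain m1 l1 where V1: "valid_list u (pe (p1 (k div 10)) (pe x (pe y m1)) # l1)" using ev_prec0.IH k by blast
    let ?L = "pe (p1 (k div 10)) (pe x (pe y m1)) # l1"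
    have "justG u (\<lambda>P. \<exists>b\<in>set ?L. P b) (pe k (pe (pe x 0) (pe y 0)))"
      by (rule justG_prec0[OF k(1)]) auto
    with V1 have "valid_list u (pe k (pe (pe x 0) (pe y 0)) # ?L)" by (simp only: valid_list.simps)
    then show "\<exists>m l. valid_list u (pe k (pe (pe x 0) (pe y m)) # l)" by blast
  qed
next
  case (ev_precS f g x n y z)
  show ?case
  proof (intro allI impI)
    fix k assume dk: "decode k = RPrec f g"
    then have k: "k mod 10 = 8" "f = decode (p1 (k div 10))" "g = decode (p2 (k div 10))"
      using decode_inv(9) by blast+
    obtain m1 l1 where V1: "valid_list u (pe k (pe (pe x n) (pe y m1)) # l1)" using ev_precS.IH(1) dk by blast
    obtain m2 l2 where V2: "valid_list u (pe (p2 (k div 10)) (pe (pe x (pe n y)) (pe z m2)) # l2)"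
      using ev_precS.IH(2) k by blast
    let ?L = "(pe k (pe (pe x n) (pe y m1)) # l1) @ (pe (p2 (k div 10)) (pe (pe x (pe n y)) (pe z m2)) # l2)"
    have "valid_list u ?L" by (rule valid_append[OF V1 V2])
    moreover have "justG u (\<lambda>P. \<exists>b\<in>set ?L. P b) (pe k (pe (pe x (Suc n)) (pe z y)))"
      by (rule justG_precS[OF k(1)]) auto
    ultimately have "valid_list u (pe k (pe (pe x (Suc n)) (pe z y)) # ?L)" by (simp only: valid_list.simps)
    then show "\<exists>m l. valid_list u (pe k (pe (pe x (Suc n)) (pe z m)) # l)" by blast
  qed
next
  case (ev_mn f x n)
  show ?case
  proof (intro allI impI)
    fix k assume dk: "decode k = RMn f"
    then have k: "k mod 10 = 9" "f = decode (k div 10)"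
      using decode_inv(10) by blast+
    obtain m0 l0 where V0: "valid_list u (pe (k div 10) (pe (pe x n) (pe 0 m0)) # l0)"
      using ev_mn.IH(1) k by blast
    have "\<forall>i<n. \<exists>kk. kk \<noteq> 0 \<and> (\<exists>m l. valid_list u (pe (k div 10) (pe (pe x i) (pe kk m)) # l))"
      using ev_mn.IH(2) k by blast
    from collect[OF this] obtain l' where l': "valid_list u l'"
      "\<forall>i<n. \<exists>b\<in>set l'. p1 b = k div 10 \<and> p1 (p2 b) = pe x i \<and> p1 (p2 (p2 b)) \<noteq> 0" by blast
    let ?L = "(pe (k div 10) (pe (pe x n) (pe 0 m0)) # l0) @ l'"
    have "valid_list u ?L" by (rule valid_append[OF V0 l'(1)])
    moreover have "justG u (\<lambda>P. \<exists>b\<in>set ?L. P b) (pe k (pe x (pe n 0)))"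
      by (rule justG_mn[OF k(1)]) (use l'(2) in auto)
    ultimately have "valid_list u (pe k (pe x (pe n 0)) # ?L)" by (simp only: valid_list.simps)
    then show "\<exists>m l. valid_list u (pe k (pe x (pe n m)) # l)" by blast
  qed
qed

abbreviation Ou :: "(nat \<Rightarrow> nat) \<Rightarrow> nat \<Rightarrow> nat option" where "Ou u \<equiv> (\<lambda>n. Some (u n))"

lemma tc_prog: assumes "tc h" shows "eval (Ou u) (SOME p. \<forall>u x. eval (Ou u) p x (h u x)) x (h u x)"
proof -
  from assms have "\<exists>p. \<forall>u x. eval (Ou u) p x (h u x)" by (simp add: tc_def)
  then have "\<forall>u x. eval (Ou u) (SOME p. \<forall>u x. eval (Ou u) p x (h u x)) x (h u x)" by (rule someI_ex)
  then show ?thesis by blast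
qed

definition CHK :: recf where "CHK = (SOME p. \<forall>u x. eval (Ou u) p x (if check u x then 0 else 1))"

lemma tc_chk: "tc (\<lambda>u z. if check u z then 0 else 1)"
  by (intro tc_if tc_check tc_const)

lemma CHK_eval: "eval (Ou u) CHK z (if check u z then 0 else 1)"
  unfolding CHK_def by (rule tc_prog[OF tc_chk])

definition Uprog :: recf where "Uprog = RComp RFst (RMn CHK)"

lemma check_sound:
  assumes "check u (pe (pe k x) w)"
  shows "eval (Ou u) (decode k) x (p1 w)"
proof -
  let ?l = "list_decode (p2 w)"
  have L: "list_encode ?l = p2 w" by simp
  from assms have v: "validn u (list_encode ?l)" and ne: "list_encode ?l \<noteq> 0"
    and h: "p1 (hdn (list_encode ?l)) = k" "p1 (p2 (hdn (list_encode ?l))) = x"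
       "p1 (p2 (p2 (hdn (list_encode ?l)))) = p1 w"
    unfolding check_def L by auto
  from ne have ne': "?l \<noteq> []" by (metis list_encode.simps(1))
  from v have "valid_list u ?l" using validn_list[of u ?l] by blast
  moreover have "hd ?l \<in> set ?l" using ne' by simp
  ultimately have "eval (Ou u) (decode (p1 (hd ?l))) (p1 (p2 (hd ?l))) (p1 (p2 (p2 (hd ?l))))"
    by (rule sound)
  then show ?thesis using h hdn_list[OF ne'] by simp
qed

lemma check_complete:
  assumes "eval (Ou u) (decode k) x y"
  shows "\<exists>w. check u (pe (pe k x) w) \<and> p1 w = y"
proof -
  obtain m l where V: "valid_list u (pe k (pe x (pe y m)) # l)"
    using complete[OF assms] by blast
  define L where "L = list_encode (pe k (pe x (pe y m)) # l)"
  have v: "validn u L" unfolding L_def using V validn_list by blast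
  have L0: "L \<noteq> 0" unfolding L_def by simp
  have hd: "hdn L = pe k (pe x (pe y m))" unfolding L_def by simp
  have "check u (pe (pe k x) (pe y L))"
    unfolding check_def using v L0 hd by simp
  then show ?thesis by (intro exI[of _ "pe y L"]) simp
qed

lemma U_correct: "eval (Ou u) Uprog (pe k x) y \<longleftrightarrow> eval (Ou u) (decode k) x y"
proof
  assume "eval (Ou u) Uprog (pe k x) y"
  then obtain w where w0: "eval (Ou u) (RMn CHK) (pe k x) w" "eval (Ou u) RFst w y"
    unfolding Uprog_def by (cases rule: eval.cases) auto
  from w0(2) have w2: "y = p1 w" by (cases rule: eval.cases) auto
  from w0(1) have "eval (Ou u) CHK (pe (pe k x) w) 0" by (cases rule: eval.cases) auto
  with CHK_eval[of u "pe (pe k x) w"] have "(if check u (pe (pe k x) w) then 0 else 1) = (0::nat)"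
    by (rule eval_det)
  then have "check u (pe (pe k x) w)" by (simp split: if_splits)
  then show "eval (Ou u) (decode k) x y" using check_sound w2 by simp
next
  assume E: "eval (Ou u) (decode k) x y"
  then obtain w0 where "check u (pe (pe k x) w0)" using check_complete by blast
  then have ex: "\<exists>w. check u (pe (pe k x) w)" by blast
  let ?n = "LEAST w. check u (pe (pe k x) w)"
  have c: "check u (pe (pe k x) ?n)" using ex by (rule LeastI_ex)
  have nc: "\<And>m. m < ?n \<Longrightarrow> \<not> check u (pe (pe k x) m)" using not_less_Least by blast
  have "eval (Ou u) (RMn CHK) (pe k x) ?n"
  proof (rule eval.intros(11))
    show "eval (Ou u) CHK (pe (pe k x) ?n) 0" using CHK_eval[of u "pe (pe k x) ?n"] c by simp
    show "\<forall>m<?n. \<exists>k'. k' \<noteq> 0 \<and> eval (Ou u) CHK (pe (pe k x) m) k'"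
    proof (intro allI impI)
      fix m assume "m < ?n"
      then have "\<not> check u (pe (pe k x) m)" by (rule nc)
      then have "eval (Ou u) CHK (pe (pe k x) m) 1" using CHK_eval[of u "pe (pe k x) m"] by simp
      then show "\<exists>k'. k' \<noteq> 0 \<and> eval (Ou u) CHK (pe (pe k x) m) k'" by blast
    qed
  qed
  then have "eval (Ou u) Uprog (pe k x) (p1 ?n)" unfolding Uprog_def by (rule eval.intros(7)[OF _ eval.intros(4)])
  moreover have "eval (Ou u) (decode k) x (p1 ?n)" using check_sound[OF c] .
  ultimately show "eval (Ou u) Uprog (pe k x) y" using eval_det[OF E] by metis
qed

fun subst :: "recf \<Rightarrow> recf \<Rightarrow> recf" where
  "subst ROrc q = q" | "subst RZero q = RZero" | "subst RSuc q = RSuc" | "subst RId q = RId"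
| "subst RFst q = RFst" | "subst RSnd q = RSnd"
| "subst (RComp f g) q = RComp (subst f q) (subst g q)"
| "subst (RPair f g) q = RPair (subst f q) (subst g q)"
| "subst (RPrec f g) q = RPrec (subst f q) (subst g q)"
| "subst (RMn f) q = RMn (subst f q)"

lemma subst_eval2:
  assumes A: "\<And>n v. Or2 n = Some v \<Longrightarrow> eval Or q n v"
  shows "eval Or2 p x y \<Longrightarrow> eval Or (subst p q) x y"
proof (induction rule: eval.induct)
  case (ev_mn f x n)
  then show ?case by (auto intro!: eval.intros(11))
qed (auto intro: eval.intros A)

lemma subst_eval1:
  assumes A: "\<And>n v. eval Or q n v \<Longrightarrow> Or2 n = Some v"
  shows "eval Or r x y \<Longrightarrow> r = subst p q \<Longrightarrow> eval Or2 p x y"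
proof (induction arbitrary: p rule: eval.induct)
  case (ev_zero x)
  then show ?case using A by (cases p) (auto intro: eval.intros)
next
  case (ev_suc x)
  then show ?case using A by (cases p) (auto intro: eval.intros)
next
  case (ev_id x)
  then show ?case using A by (cases p) (auto intro: eval.intros)
next
  case (ev_fst x)
  then show ?case using A by (cases p) (auto intro: eval.intros)
next
  case (ev_snd x)
  then show ?case using A by (cases p) (auto intro: eval.intros)
next
  case (ev_orc x y)
  then show ?case using A by (cases p) (auto intro: eval.intros)
next
  case (ev_comp g x y f z)
  have E: "eval Or (RComp f g) x z" using ev_comp.hyps eval.intros(7) by blast
  from ev_comp show ?case using A E by (cases p) (auto intro: eval.intros)
next
  case (ev_pair f x a g b)
  have E: "eval Or (RPair f g) x (pe a b)" using ev_pair.hyps eval.intros(8) by blast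
  from ev_pair show ?case using A E by (cases p) (auto intro: eval.intros)
next
  case (ev_prec0 f x y g)
  have E: "eval Or (RPrec f g) (pe x 0) y" using ev_prec0.hyps eval.intros(9) by blast
  from ev_prec0 show ?case using A E by (cases p) (auto intro: eval.intros)
next
  case (ev_precS f g x n y z)
  have E: "eval Or (RPrec f g) (pe x (Suc n)) z" using ev_precS.hyps eval.intros(10) by blast
  show ?case
  proof (cases p)
    case (RPrec f' g')
    with ev_precS.prems have fg: "f = subst f' q" "g = subst g' q" by auto
    have "eval Or2 (RPrec f' g') (pe x n) y" using ev_precS.IH(1)[of "RPrec f' g'"] fg by simp
    moreover have "eval Or2 g' (pe x (pe n y)) z" using ev_precS.IH(2)[of g'] fg by simp
    ultimately show ?thesis using RPrec by (auto intro: eval.intros(10))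
  qed (use ev_precS A E in \<open>auto intro: eval.intros\<close>)
next
  case (ev_mn f x n)
  have E: "eval Or (RMn f) x n" using ev_mn by (intro eval.intros(11)) auto
  show ?case
  proof (cases p)
    case (RMn f')
    with ev_mn.prems have fg: "f = subst f' q" by auto
    have "eval Or2 f' (pe x n) 0" using ev_mn.IH(1)[of f'] fg by simp
    moreover have "\<forall>m<n. \<exists>k. k \<noteq> 0 \<and> eval Or2 f' (pe x m) k" using ev_mn.IH(2) fg by blast
    ultimately show ?thesis using RMn by (auto intro: eval.intros(11))
  qed (use ev_mn A E in \<open>auto intro: eval.intros\<close>)
qed

lemma subst_eval:
  assumes "\<And>n v. eval Or q n v \<longleftrightarrow> Or2 n = Some v"
  shows "eval Or (subst p q) x y \<longleftrightarrow> eval Or2 p x y"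
  using subst_eval1[of Or q Or2 "subst p q" x y p] subst_eval2[of Or2 Or q p x y] assms by blast

fun encsub :: "recf \<Rightarrow> nat \<Rightarrow> nat" where
  "encsub ROrc c = c" | "encsub RZero c = 0" | "encsub RSuc c = 1" | "encsub RId c = 2"
| "encsub RFst c = 3" | "encsub RSnd c = 4"
| "encsub (RComp f g) c = 6 + 10 * pe (encsub f c) (encsub g c)"
| "encsub (RPair f g) c = 7 + 10 * pe (encsub f c) (encsub g c)"
| "encsub (RPrec f g) c = 8 + 10 * pe (encsub f c) (encsub g c)"
| "encsub (RMn f) c = 9 + 10 * encsub f c"

lemma decode_encsub: "decode (encsub p c) = subst p (decode c)"
  by (induction p) (simp_all add: decode_n decode_encode[of RZero, simplified]
      decode_encode[of RSuc, simplified] decode_encode[of RId, simplified]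
      decode_encode[of RFst, simplified] decode_encode[of RSnd, simplified])

lemma tc_encsub: "tc (\<lambda>u c. encsub p c)"
  by (induction p) (auto intro!: tc_add tc_mult tc_pe tc_const tc_id)

primrec constp :: "nat \<Rightarrow> recf" where
  "constp 0 = RZero" | "constp (Suc c) = RComp RSuc (constp c)"

lemma eval_constp: "eval Or (constp c) x c"
  by (induction c) (auto intro: eval.intros)

definition cX :: "nat set \<Rightarrow> nat \<Rightarrow> nat" where "cX X n = (if n \<in> X then 1 else 0)"

lemma chi_eq: "chi X = Ou (cX X)"
  by (auto simp: chi_def cX_def fun_eq_iff)

lemma Phi_total: "(\<And>x. eval Or p x (h x)) \<Longrightarrow> Phi Or (encode p) = (\<lambda>x. Some (h x))"
  by (auto simp: fun_eq_iff Phi_Some)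

lemma Phi_none: "(\<And>x y. \<not> eval Or p x y) \<Longrightarrow> Phi Or (encode p) = (\<lambda>x. None)"
  by (auto simp: fun_eq_iff Phi_None)

definition Nel :: "nat \<Rightarrow> nat \<Rightarrow> nat option" where "Nel e = (\<lambda>x. Some e)"

lemma Nel_B: "Nel e \<in> B_rel X"
  unfolding B_rel_def Nel_def using Phi_total[OF eval_constp] by blast

lemma K0_B: "(\<lambda>x. Some 0) \<in> B_rel X"
  unfolding B_rel_def using Phi_total[of "chi X" RZero "\<lambda>x. 0"] by (auto intro: eval.intros)

lemma Bot_B: "(\<lambda>x. None) \<in> B_rel X"
proof -
  have "\<not> eval Or (RMn RSuc) x y" for Or x y
  proof
    assume "eval Or (RMn RSuc) x y"
    then have "eval Or RSuc (pe x y) 0" by (cases rule: eval.cases) auto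
    then show False by (cases rule: eval.cases)
  qed
  then show ?thesis unfolding B_rel_def using Phi_none by blast
qed

definition sprog :: recf where "sprog = RComp RSuc (RComp ROrc (constp 1))"
definition Sel :: "nat \<Rightarrow> nat option" where "Sel = Nel (encode sprog)"

lemma Sel_B: "Sel \<in> B_rel X" unfolding Sel_def by (rule Nel_B)

lemma B_app_S: "B_app Sel (Nel e) = Nel (Suc e)"
proof -
  have J: "join Sel (Nel e) = Ou (\<lambda>n. if even n then encode sprog else e)"
    by (auto simp: join_def Sel_def Nel_def fun_eq_iff)
  have "eval (Ou (\<lambda>n. if even n then encode sprog else e)) sprog x (Suc e)" for x
  proof -
    let ?O = "Ou (\<lambda>n. if even n then encode sprog else e)"
    have "eval ?O ROrc 1 e" by (rule eval.intros(6)) simp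
    then have "eval ?O (RComp ROrc (constp 1)) x e" by (rule eval.intros(7)[OF eval_constp])
    then show ?thesis unfolding sprog_def by (rule eval.intros(7)) (rule eval.intros(2))
  qed
  then have "Phi (Ou (\<lambda>n. if even n then encode sprog else e)) (encode sprog) = (\<lambda>x. Some (Suc e))"
    by (rule Phi_total)
  then have "Phi (join Sel (Nel e)) (encode sprog) = Nel (Suc e)"
    unfolding J by (simp add: Nel_def)
  then show ?thesis by (simp add: B_app_def Sel_def Nel_def)
qed

lemma tc_SH: "tc (\<lambda>u x. 2 * x + 2)" by (intro tc_intros)

definition SHp :: recf where "SHp = (SOME p. \<forall>u x. eval (Ou u) p x (2 * x + 2))"

lemma SH_eval: "eval (Ou u) SHp x (2 * x + 2)"
  unfolding SHp_def by (rule tc_prog[OF tc_SH])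

definition qsub :: recf where "qsub = RComp ROrc SHp"

lemma qsub_eval: "eval (Ou u) qsub n v \<longleftrightarrow> Ou (\<lambda>q. u (2 * q + 2)) n = Some v"
proof
  assume "eval (Ou u) qsub n v"
  then obtain w where w: "eval (Ou u) SHp n w" "eval (Ou u) ROrc w v"
    unfolding qsub_def by (cases rule: eval.cases) auto
  from w(1) SH_eval have "w = 2 * n + 2" by (rule eval_det)
  moreover from w(2) have "v = u w" by (cases rule: eval.cases) auto
  ultimately show "Ou (\<lambda>q. u (2 * q + 2)) n = Some v" by simp
next
  assume "Ou (\<lambda>q. u (2 * q + 2)) n = Some v"
  then have "Ou u (2 * n + 2) = Some v" by simp
  then have "eval (Ou u) ROrc (2 * n + 2) v" by (rule eval.intros(6))
  then show "eval (Ou u) qsub n v" unfolding qsub_def by (rule eval.intros(7)[OF SH_eval])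
qed

definition Usub :: recf where "Usub = subst Uprog qsub"

lemma Usub_eval: "eval (Ou u) Usub z v \<longleftrightarrow> eval (Ou (\<lambda>q. u (2 * q + 2))) Uprog z v"
  unfolding Usub_def by (rule subst_eval[OF qsub_eval])

definition O1 :: recf where "O1 = RComp ROrc (constp 1)"

lemma O1_eval: "eval (Ou u) O1 x v \<longleftrightarrow> v = u 1"
proof
  assume "eval (Ou u) O1 x v"
  then obtain w where w: "eval (Ou u) (constp 1) x w" "eval (Ou u) ROrc w v"
    unfolding O1_def by (cases rule: eval.cases) auto
  from w(1) eval_constp have "w = 1" by (rule eval_det)
  with w(2) show "v = u 1" by (cases rule: eval.cases) auto
next
  assume "v = u 1"
  have "eval (Ou u) ROrc 1 (u 1)" by (rule eval.intros(6)) simp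
  then show "eval (Ou u) O1 x v" unfolding O1_def \<open>v = u 1\<close> by (rule eval.intros(7)[OF eval_constp])
qed

definition cprog :: recf where "cprog = RComp RZero (RComp Usub (RPair O1 O1))"

lemma cprog_eval:
  "eval (Ou u) cprog x y \<longleftrightarrow> y = 0 \<and> (\<exists>v. eval (Ou (\<lambda>q. u (2 * q + 2))) Uprog (pe (u 1) (u 1)) v)"
proof
  assume "eval (Ou u) cprog x y"
  then obtain w where w: "eval (Ou u) (RComp Usub (RPair O1 O1)) x w" "eval (Ou u) RZero w y"
    unfolding cprog_def by (cases rule: eval.cases) auto
  from w(2) have y: "y = 0" by (cases rule: eval.cases) auto
  from w(1) obtain z where z: "eval (Ou u) (RPair O1 O1) x z" "eval (Ou u) Usub z w"
    by (cases rule: eval.cases) auto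
  from z(1) obtain a b where "z = pe a b" "eval (Ou u) O1 x a" "eval (Ou u) O1 x b"
    by (cases rule: eval.cases) auto
  then have "z = pe (u 1) (u 1)" using O1_eval by simp
  with z(2) y show "y = 0 \<and> (\<exists>v. eval (Ou (\<lambda>q. u (2 * q + 2))) Uprog (pe (u 1) (u 1)) v)"
    using Usub_eval by auto
next
  assume "y = 0 \<and> (\<exists>v. eval (Ou (\<lambda>q. u (2 * q + 2))) Uprog (pe (u 1) (u 1)) v)"
  then obtain v where y: "y = 0" and v: "eval (Ou (\<lambda>q. u (2 * q + 2))) Uprog (pe (u 1) (u 1)) v" by blast
  have "eval (Ou u) (RPair O1 O1) x (pe (u 1) (u 1))" by (rule eval.intros(8)) (simp_all add: O1_eval)
  moreover have "eval (Ou u) Usub (pe (u 1) (u 1)) v" using v Usub_eval by simp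
  ultimately have "eval (Ou u) (RComp Usub (RPair O1 O1)) x v" by (rule eval.intros(7))
  then show "eval (Ou u) cprog x y" unfolding cprog_def y by (rule eval.intros(7)) (rule eval.intros(1))
qed

definition Cel :: "nat set \<Rightarrow> nat \<Rightarrow> nat option" where
  "Cel X = (\<lambda>n. Some (if n = 0 then encode cprog else cX X (n - 1)))"

lemma tc_Cfun: "tc (\<lambda>u x. if x = 0 then encode cprog else u (x - 1))"
  by (intro tc_intros)

lemma Cel_B: "Cel X \<in> B_rel X"
proof -
  let ?p = "SOME p. \<forall>u x. eval (Ou u) p x (if x = 0 then encode cprog else u (x - 1))"
  have "eval (Ou (cX X)) ?p x (if x = 0 then encode cprog else cX X (x - 1))" for x
    by (rule tc_prog[OF tc_Cfun])
  then have "Phi (Ou (cX X)) (encode ?p) = Cel X" unfolding Cel_def by (rule Phi_total)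
  then show ?thesis unfolding B_rel_def chi_eq by blast
qed

lemma jump_iff: "e \<in> jump X \<longleftrightarrow> (\<exists>v. eval (chi X) (decode e) e v)"
  unfolding jump_def using Phi_None[of "chi X" e e] by auto

lemma B_app_C: "B_app (Cel X) (Nel e) = (if e \<in> jump X then (\<lambda>x. Some 0) else (\<lambda>x. None))"
proof -
  define w where "w = (\<lambda>n. if even n then (if n div 2 = 0 then encode cprog else cX X (n div 2 - 1)) else e)"
  have J: "join (Cel X) (Nel e) = Ou w"
    by (auto simp: join_def Cel_def Nel_def w_def fun_eq_iff)
  have w1: "w 1 = e" by (simp add: w_def)
  have w2: "(\<lambda>q. Some (w (2 * q + 2))) = chi X" by (auto simp: w_def fun_eq_iff chi_def cX_def)
  have E: "eval (Ou w) cprog x y \<longleftrightarrow> y = 0 \<and> e \<in> jump X" for x y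
    unfolding cprog_eval w1 w2 jump_iff chi_eq U_correct by (rule refl)
  have "B_app (Cel X) (Nel e) = Phi (Ou w) (encode cprog)"
    unfolding B_app_def J by (simp add: Cel_def)
  also have "\<dots> = (if e \<in> jump X then (\<lambda>x. Some 0) else (\<lambda>x. None))"
  proof (cases "e \<in> jump X")
    case True
    then show ?thesis using Phi_total[of "Ou w" cprog "\<lambda>x. 0"] E by simp
  next
    case False
    then show ?thesis using Phi_none[of "Ou w" cprog] E by simp
  qed
  finally show ?thesis .
qed

lemma tc_SEL: "tc (\<lambda>u z. if p1 z mod 2 = 0 then p1 (p2 z) else p2 (p2 z))" by (intro tc_intros)
lemma tc_HALF: "tc (\<lambda>u x. x div 2)" by (intro tc_intros)

definition SELp :: recf where "SELp = (SOME p. \<forall>u x. eval (Ou u) p x (if p1 x mod 2 = 0 then p1 (p2 x) else p2 (p2 x)))"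
definition HALFp :: recf where "HALFp = (SOME p. \<forall>u x. eval (Ou u) p x (x div 2))"

lemma SEL_eval: "eval (Ou u) SELp x (if p1 x mod 2 = 0 then p1 (p2 x) else p2 (p2 x))"
  unfolding SELp_def by (rule tc_prog[OF tc_SEL])
lemma HALF_eval: "eval (Ou u) HALFp x (x div 2)"
  unfolding HALFp_def by (rule tc_prog[OF tc_HALF])

definition Jp :: "recf \<Rightarrow> recf \<Rightarrow> recf" where
  "Jp GP P = RComp SELp (RPair RId (RPair (RComp GP HALFp) (RComp P HALFp)))"

lemma Jp_eval:
  assumes G: "\<And>x. eval (Ou w) GP x (G x)" and H: "\<And>x. eval (Ou w) P x (h x)"
  shows "eval (Ou w) (Jp GP P) n v \<longleftrightarrow> Ou (join G h) n = Some v"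
proof -
  have a: "eval (Ou w) (RComp GP HALFp) n (G (n div 2))" by (rule eval.intros(7)[OF HALF_eval G])
  have b: "eval (Ou w) (RComp P HALFp) n (h (n div 2))" by (rule eval.intros(7)[OF HALF_eval H])
  have c: "eval (Ou w) (RPair RId (RPair (RComp GP HALFp) (RComp P HALFp))) n (pe n (pe (G (n div 2)) (h (n div 2))))"
    by (rule eval.intros(8)[OF eval.intros(3) eval.intros(8)[OF a b]])
  have eq: "(if p1 (pe n (pe (G (n div 2)) (h (n div 2)))) mod 2 = 0
      then p1 (p2 (pe n (pe (G (n div 2)) (h (n div 2))))) else p2 (p2 (pe n (pe (G (n div 2)) (h (n div 2))))))
      = join G h n"
    by (simp add: join_def even_iff_mod_2_eq_zero)
  have E: "eval (Ou w) (Jp GP P) n (join G h n)"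
    unfolding Jp_def using eval.intros(7)[OF c SEL_eval] unfolding eq .
  show ?thesis
  proof
    assume "eval (Ou w) (Jp GP P) n v"
    then have "join G h n = v" by (rule eval_det[OF E])
    then show "Ou (join G h) n = Some v" by simp
  next
    assume "Ou (join G h) n = Some v"
    then have "v = join G h n" by simp
    then show "eval (Ou w) (Jp GP P) n v" using E by simp
  qed
qed

definition jcode :: "recf \<Rightarrow> nat \<Rightarrow> nat" where
  "jcode GP c = 6 + 10 * pe (encode SELp) (7 + 10 * pe (encode RId)
      (7 + 10 * pe (encode (RComp GP HALFp)) (6 + 10 * pe c (encode HALFp))))"

lemma decode_6': "decode (6 + 10 * N) = RComp (decode (p1 N)) (decode (p2 N))"
proof -
  have a1: "(6 + 10 * N) mod 10 = (6::nat)" "(6 + 10 * N) div 10 = (N::nat)" by simp_all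
  have "decode (6 + 10 * N) = RComp (decode (p1 ((6 + 10 * N) div 10))) (decode (p2 ((6 + 10 * N) div 10)))"
    by (rule decode_6) (rule a1(1))
  then show ?thesis unfolding a1(2) .
qed

lemma decode_7': "decode (7 + 10 * N) = RPair (decode (p1 N)) (decode (p2 N))"
proof -
  have a1: "(7 + 10 * N) mod 10 = (7::nat)" "(7 + 10 * N) div 10 = (N::nat)" by simp_all
  have "decode (7 + 10 * N) = RPair (decode (p1 ((7 + 10 * N) div 10))) (decode (p2 ((7 + 10 * N) div 10)))"
    by (rule decode_7) (rule a1(1))
  then show ?thesis unfolding a1(2) .
qed

lemma decode_jcode: "decode (jcode GP c) = Jp GP (decode c)"
  unfolding jcode_def Jp_def by (simp only: decode_6' decode_7' prod_encode_inverse fst_conv snd_conv decode_encode)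

lemma tc_jcode: "tc g \<Longrightarrow> tc (\<lambda>u x. jcode GP (g u x))"
  unfolding jcode_def by (intro tc_intros)

lemma tc_encsub_comp: "tc g \<Longrightarrow> tc (\<lambda>u x. encsub p (g u x))"
  using tc_comp[OF tc_encsub[of p]] by simp

lemma main:
  assumes emb: "embedding_B_K2 X Y f"
  shows "turing_le (jump X) Y"
proof -
  have sub: "f ` B_rel X \<subseteq> K2_rel Y" and inj: "inj_on f (B_rel X)"
    and app: "\<And>a a'. a \<in> B_rel X \<Longrightarrow> a' \<in> B_rel X \<Longrightarrow> K2_app (f a) (f a') = Some (f (B_app a a'))"
    using emb unfolding embedding_B_K2_def by auto
  let ?cY = "cX Y"
  have img: "\<exists>i. \<forall>x. eval (Ou ?cY) (decode i) x (f a x)" if "a \<in> B_rel X" for a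
  proof -
    from that sub have "f a \<in> K2_rel Y" by blast
    then obtain i where "\<forall>x. Phi (chi Y) i x = Some (f a x)" unfolding K2_rel_def by blast
    then show ?thesis unfolding Phi_Some chi_eq by blast
  qed
  have appE: "eval (Ou (join (f a) (f a'))) (decode (f a 0)) x (f (B_app a a') x)"
    if "a \<in> B_rel X" "a' \<in> B_rel X" for a a' x
  proof -
    have K: "K2_app (f a) (f a') = Some (f (B_app a a'))" using app that by blast
    then have c: "\<forall>x. Phi (Ou (join (f a) (f a'))) (f a 0) x \<noteq> None"
      unfolding K2_app_def by (auto split: if_splits)
    with K have "(\<lambda>x. the (Phi (Ou (join (f a) (f a'))) (f a 0) x)) = f (B_app a a')"
      unfolding K2_app_def by (auto split: if_splits)
    then have t: "the (Phi (Ou (join (f a) (f a'))) (f a 0) x) = f (B_app a a') x" by metis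
    from c have "Phi (Ou (join (f a) (f a'))) (f a 0) x \<noteq> None" by blast
    then have "Phi (Ou (join (f a) (f a'))) (f a 0) x = Some (the (Phi (Ou (join (f a) (f a'))) (f a 0) x))"
      by simp
    then have "Phi (Ou (join (f a) (f a'))) (f a 0) x = Some (f (B_app a a') x)" unfolding t .
    then show ?thesis by (simp add: Phi_Some)
  qed
  obtain gi where gi: "\<And>x. eval (Ou ?cY) (decode gi) x (f Sel x)" using img[OF Sel_B] by blast
  obtain i0 where i0: "\<And>x. eval (Ou ?cY) (decode i0) x (f (Nel 0) x)" using img[OF Nel_B] by blast
  obtain ci where ci: "\<And>x. eval (Ou ?cY) (decode ci) x (f (Cel X) x)" using img[OF Cel_B] by blast
  define GP where "GP = decode gi"
  define CP where "CP = decode ci"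
  define S0 where "S0 = decode (f Sel 0)"
  define SC where "SC = decode (f (Cel X) 0)"
  define kk where "kk = rec_nat i0 (\<lambda>_ k. encsub S0 (jcode GP k))"
  have kk0: "kk 0 = i0" and kkS: "\<And>e. kk (Suc e) = encsub S0 (jcode GP (kk e))"
    unfolding kk_def by simp_all
  have kk_eval: "eval (Ou ?cY) (decode (kk e)) x (f (Nel e) x)" for e x
  proof (induction e arbitrary: x)
    case 0
    then show ?case using i0 kk0 by simp
  next
    case (Suc e)
    have J: "eval (Ou ?cY) (Jp GP (decode (kk e))) n v \<longleftrightarrow> Ou (join (f Sel) (f (Nel e))) n = Some v" for n v
      by (rule Jp_eval[OF gi[folded GP_def] Suc.IH])
    have "decode (kk (Suc e)) = subst S0 (Jp GP (decode (kk e)))"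
      by (simp add: kkS decode_encsub decode_jcode)
    then have "eval (Ou ?cY) (decode (kk (Suc e))) x y \<longleftrightarrow> eval (Ou (join (f Sel) (f (Nel e)))) S0 x y" for y
      using subst_eval[OF J] by simp
    moreover have "eval (Ou (join (f Sel) (f (Nel e)))) S0 x (f (Nel (Suc e)) x)"
      using appE[OF Sel_B Nel_B, of e x] unfolding S0_def B_app_S .
    ultimately show ?case by blast
  qed
  define kc where "kc e = encsub SC (jcode CP (kk e))" for e
  have kc_eval: "eval (Ou ?cY) (decode (kc e)) x (f (B_app (Cel X) (Nel e)) x)" for e x
  proof -
    have J: "eval (Ou ?cY) (Jp CP (decode (kk e))) n v \<longleftrightarrow> Ou (join (f (Cel X)) (f (Nel e))) n = Some v" for n v
      by (rule Jp_eval[OF ci[folded CP_def] kk_eval])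
    have "decode (kc e) = subst SC (Jp CP (decode (kk e)))"
      by (simp add: kc_def decode_encsub decode_jcode)
    then have "eval (Ou ?cY) (decode (kc e)) x y \<longleftrightarrow> eval (Ou (join (f (Cel X)) (f (Nel e)))) SC x y" for y
      using subst_eval[OF J] by simp
    moreover have "eval (Ou (join (f (Cel X)) (f (Nel e)))) SC x (f (B_app (Cel X) (Nel e)) x)"
      using appE[OF Cel_B Nel_B, of e x] unfolding SC_def .
    ultimately show ?thesis by blast
  qed
  have tc_kk: "tc (\<lambda>u e. kk e)"
  proof (rule tc_precI[OF tc_const _ tc_const tc_id])
    show "tc (\<lambda>u w. encsub S0 (jcode GP (p2 (p2 w))))"
      by (intro tc_encsub_comp tc_jcode tc_p2 tc_id)
    fix u x
    show "kk x = precf (\<lambda>u x. i0) (\<lambda>u w. encsub S0 (jcode GP (p2 (p2 w)))) u 0 x"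
      by (induction x) (simp_all add: kk0 kkS)
  qed
  have tc_kc: "tc (\<lambda>u e. kc e)"
    unfolding kc_def by (intro tc_encsub_comp tc_jcode tc_comp[OF tc_kk tc_id, simplified])
  have "f (\<lambda>x. Some 0) \<noteq> f (\<lambda>x. None)"
  proof
    assume "f (\<lambda>x. Some 0) = f (\<lambda>x. None)"
    then have "(\<lambda>x::nat. Some (0::nat)) = (\<lambda>x. None)"
      using inj_onD[OF inj _ K0_B[of X] Bot_B[of X]] by blast
    then show False by (metis option.distinct(1))
  qed
  then obtain p0 where p0: "f (\<lambda>x. Some 0) p0 \<noteq> f (\<lambda>x. None) p0" by (metis ext)
  define v0 where "v0 = f (\<lambda>x. Some 0) p0"
  have fc: "f (B_app (Cel X) (Nel e)) p0 = v0 \<longleftrightarrow> e \<in> jump X" for e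
    using p0 unfolding B_app_C v0_def by auto
  have tc_eq: "tc (\<lambda>u y. if y = v0 then 1 else 0)" by (intro tc_intros)
  define KCp where "KCp = (SOME p. \<forall>u x. eval (Ou u) p x (kc x))"
  define EQp where "EQp = (SOME p. \<forall>u x. eval (Ou u) p x (if x = v0 then 1 else 0))"
  have KC: "eval (Ou u) KCp x (kc x)" for u x unfolding KCp_def by (rule tc_prog[OF tc_kc])
  have EQ: "eval (Ou u) EQp x (if x = v0 then 1 else 0)" for u x unfolding EQp_def by (rule tc_prog[OF tc_eq])
  define Fin where "Fin = RComp EQp (RComp Uprog (RPair KCp (constp p0)))"
  have Fin_eval: "eval (Ou ?cY) Fin e (if e \<in> jump X then 1 else 0)" for e
  proof -
    have "eval (Ou ?cY) (RPair KCp (constp p0)) e (pe (kc e) p0)"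
      by (rule eval.intros(8)[OF KC eval_constp])
    moreover have "eval (Ou ?cY) Uprog (pe (kc e) p0) (f (B_app (Cel X) (Nel e)) p0)"
      unfolding U_correct by (rule kc_eval)
    ultimately have "eval (Ou ?cY) (RComp Uprog (RPair KCp (constp p0))) e (f (B_app (Cel X) (Nel e)) p0)"
      by (rule eval.intros(7))
    then have "eval (Ou ?cY) Fin e (if f (B_app (Cel X) (Nel e)) p0 = v0 then 1 else 0)"
      unfolding Fin_def by (rule eval.intros(7)[OF _ EQ])
    then show ?thesis unfolding fc .
  qed
  have "Phi (chi Y) (encode Fin) = (\<lambda>e. Some (if e \<in> jump X then 1 else 0))"
    unfolding chi_eq by (rule Phi_total[OF Fin_eval])
  then have "\<forall>x. Phi (chi Y) (encode Fin) x = chi (jump X) x" by (simp add: chi_def)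
  then show ?thesis unfolding turing_le_def by blast
qed

theorem corollary6p15:
  fixes X Y :: "nat set"
  assumes "\<exists>f. embedding_B_K2 X Y f"
  shows "turing_le (jump X) Y"
  using assms main by blast

end
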